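(* Let $U$ be a disjunctive uninorm with neutral element $e\in\,]0,1[$, let $x\in[0,1]$ with $x<e$ be such that $U(x,\cdot)$ is continuous with range $[0,1]$, and let $a_x=\lim_{n\to+\infty}x_U^{(n)}$, $d_x=\lim_{n\to+\infty}x_U^{(-n)}$. If $U(x,t)=t$ for all $t\in[0,a_x]\cup[d_x,1]$, then $U$ is an ordinal sum of semigroups defined on $]a_x,d_x[$ and on $[0,a_x]\cup[d_x,1]$; namely, both $]a_x,d_x[$ and $[0,a_x]\cup[d_x,1]$ are closed under $U$, and $U(s,t)=t$ for all $s\in\,]a_x,d_x[$ and $t\in[0,a_x]\cup[d_x,1]$.
   Context: A uninorm is a map $U:[0,1]^2\to[0,1]$ that is commutative, associative, non-decreasing in each variable, and has a neutral element $e\in[0,1]$; it is disjunctive if $U(1,0)=1$. Under the hypotheses there is a unique $y\in[0,1]$ with $U(x,y)=e$ (and $y>e$). Define $x_U^{(0)}=e$, $x_U^{(n)}=U(x,x_U^{(n-1)})$ for $n\in\mathbb{N}$, and $x_U^{(-n)}=y_U^{(n)}$ where $y_U^{(0)}=e$, $y_U^{(n)}=U(y,y_U^{(n-1)})$; the sequence $(x_U^{(n)})_{n\ge0}$ is non-increasing and $(x_U^{(-n)})_{n\ge0}$ is non-decreasing, so the limits exist. *)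

theory Defs
  imports "HOL-Analysis.Analysis"
begin

text \<open>A uninorm on the unit interval with neutral element e; only values on [0,1]^2 matter.\<close>
definition uninorm :: "(real \<Rightarrow> real \<Rightarrow> real) \<Rightarrow> real \<Rightarrow> bool" where
  "uninorm U e \<longleftrightarrow>
     e \<in> {0..1} \<and>
     (\<forall>x\<in>{0..1}. \<forall>y\<in>{0..1}. U x y \<in> {0..1}) \<and>
     (\<forall>x\<in>{0..1}. \<forall>y\<in>{0..1}. U x y = U y x) \<and>
     (\<forall>x\<in>{0..1}. \<forall>y\<in>{0..1}. \<forall>z\<in>{0..1}. U x (U y z) = U (U x y) z) \<and>
     (\<forall>x\<in>{0..1}. \<forall>y\<in>{0..1}. \<forall>z\<in>{0..1}. x \<le> y \<longrightarrow> U x z \<le> U y z) \<and>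
     (\<forall>x\<in>{0..1}. U e x = x)"

definition disjunctive_uninorm :: "(real \<Rightarrow> real \<Rightarrow> real) \<Rightarrow> real \<Rightarrow> bool" where
  "disjunctive_uninorm U e \<longleftrightarrow> uninorm U e \<and> U 1 0 = 1"

definition upartner :: "(real \<Rightarrow> real \<Rightarrow> real) \<Rightarrow> real \<Rightarrow> real \<Rightarrow> real" where
  "upartner U e x = (THE y. y \<in> {0..1} \<and> U x y = e)"

primrec upow :: "(real \<Rightarrow> real \<Rightarrow> real) \<Rightarrow> real \<Rightarrow> real \<Rightarrow> nat \<Rightarrow> real" where
  "upow U e x 0 = e"
| "upow U e x (Suc n) = U x (upow U e x n)"

text \<open>x_U^(-n) = y_U^(n) where y is the partner of x.\<close>
definition upow_neg :: "(real \<Rightarrow> real \<Rightarrow> real) \<Rightarrow> real \<Rightarrow> real \<Rightarrow> nat \<Rightarrow> real" where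
  "upow_neg U e x n = upow U e (upartner U e x) n"

end

theory Submission
  imports Defs
begin

theorem mainTheorem11:
  fixes U :: "real \<Rightarrow> real \<Rightarrow> real" and e x a d :: real
  assumes "disjunctive_uninorm U e"
    and "0 < e" and "e < 1"
    and "x \<in> {0..1}" and "x < e"
    and "continuous_on {0..1} (U x)"
    and "U x ` {0..1} = {0..1}"
    and "upow U e x \<longlonglongrightarrow> a"
    and "upow_neg U e x \<longlonglongrightarrow> d"
    and "\<forall>t \<in> {0..a} \<union> {d..1}. U x t = t"
  shows "(\<forall>s\<in>{a<..<d}. \<forall>t\<in>{a<..<d}. U s t \<in> {a<..<d})
       \<and> (\<forall>s\<in>{0..a} \<union> {d..1}. \<forall>t\<in>{0..a} \<union> {d..1}. U s t \<in> {0..a} \<union> {d..1})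
       \<and> (\<forall>s\<in>{a<..<d}. \<forall>t\<in>{0..a} \<union> {d..1}. U s t = t)"
proof -
  have un: "uninorm U e" using assms(1) by (simp add: disjunctive_uninorm_def)
  have cl: "\<And>s t. s \<in> {0..1} \<Longrightarrow> t \<in> {0..1} \<Longrightarrow> U s t \<in> {0..1}"
    using un unfolding uninorm_def by blast
  have com: "\<And>s t. s \<in> {0..1} \<Longrightarrow> t \<in> {0..1} \<Longrightarrow> U s t = U t s"
    using un unfolding uninorm_def by blast
  have ass: "\<And>s t z. s \<in> {0..1} \<Longrightarrow> t \<in> {0..1} \<Longrightarrow> z \<in> {0..1} \<Longrightarrow> U s (U t z) = U (U s t) z"
    using un unfolding uninorm_def by blast
  have mono1: "\<And>s t z. s \<in> {0..1} \<Longrightarrow> t \<in> {0..1} \<Longrightarrow> z \<in> {0..1} \<Longrightarrow> s \<le> t \<Longrightarrow> U s z \<le> U t z"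
    using un unfolding uninorm_def by blast
  have neu: "\<And>t. t \<in> {0..1} \<Longrightarrow> U e t = t"
    using un unfolding uninorm_def by blast
  have e01: "e \<in> {0..1}" using assms(2,3) by simp
  have mono2: "\<And>s t z. s \<in> {0..1} \<Longrightarrow> t \<in> {0..1} \<Longrightarrow> z \<in> {0..1} \<Longrightarrow> s \<le> t \<Longrightarrow> U z s \<le> U z t"
    using mono1 com by metis
  have x01: "x \<in> {0..1}" by fact
  obtain y where y01: "y \<in> {0..1}" and xy: "U x y = e"
    using assms(7) e01 by (metis imageE)
  have "upartner U e x = y"
    unfolding upartner_def
  proof (rule the_equality)
    show "y \<in> {0..1} \<and> U x y = e" using y01 xy by simp
  next
    fix z assume z: "z \<in> {0..1} \<and> U x z = e"
    have "z = U e z" using neu z by simp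
    also have "\<dots> = U (U x y) z" using xy by simp
    also have "\<dots> = U (U y x) z" using com x01 y01 by simp
    also have "\<dots> = U y (U x z)" using ass[of y x z] x01 y01 z by simp
    also have "\<dots> = U y e" using z by simp
    also have "\<dots> = y" using com neu y01 e01 by metis
    finally show "z = y" .
  qed
  hence yneg: "upow_neg U e x = upow U e y" unfolding upow_neg_def by (simp add: fun_eq_iff)
  have yx: "U y x = e" using xy com x01 y01 by simp
  have pw: "\<And>z n. z \<in> {0..1} \<Longrightarrow> upow U e z n \<in> {0..1}"
  proof -
    fix z :: real and n :: nat assume z: "z \<in> {0..1}"
    show "upow U e z n \<in> {0..1}" by (induction n) (use e01 in simp, metis cl z upow.simps(2))
  qed
  have mult: "\<And>z n k. z \<in> {0..1} \<Longrightarrow> U (upow U e z n) (upow U e z k) = upow U e z (n + k)"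
  proof -
    fix z :: real and n k :: nat assume z: "z \<in> {0..1}"
    show "U (upow U e z n) (upow U e z k) = upow U e z (n + k)"
    proof (induction n)
      case 0 then show ?case using neu pw z by simp
    next
      case (Suc n)
      have "U (upow U e z (Suc n)) (upow U e z k) = U (U z (upow U e z n)) (upow U e z k)" by simp
      also have "\<dots> = U z (U (upow U e z n) (upow U e z k))" using ass pw z by simp
      also have "\<dots> = upow U e z (Suc n + k)" using Suc by simp
      finally show ?case .
    qed
  qed
  have inv: "\<And>n. U (upow U e y n) (upow U e x n) = e"
  proof -
    fix n show "U (upow U e y n) (upow U e x n) = e"
    proof (induction n)
      case 0 then show ?case using neu e01 by simp
    next
      case (Suc n)
      let ?Y = "upow U e y n" and ?X = "upow U e x n"
      have Y: "?Y \<in> {0..1}" and X: "?X \<in> {0..1}" using pw x01 y01 by auto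
      have "U (upow U e y (Suc n)) (upow U e x (Suc n)) = U (U y ?Y) (U x ?X)" by simp
      also have "\<dots> = U y (U ?Y (U x ?X))" using ass Y y01 x01 X cl by simp
      also have "\<dots> = U y (U (U ?Y x) ?X)" using ass Y y01 x01 X cl by simp
      also have "\<dots> = U y (U (U x ?Y) ?X)" using com Y x01 by simp
      also have "\<dots> = U y (U x (U ?Y ?X))" using ass Y y01 x01 X cl by simp
      also have "\<dots> = e" using Suc yx neu[OF x01] com[OF x01 e01] by simp
      finally show ?case .
    qed
  qed
  have fixy: "\<And>t. t \<in> {0..1} \<Longrightarrow> U x t = t \<Longrightarrow> U y t = t"
  proof -
    fix t :: real assume t: "t \<in> {0..1}" "U x t = t"
    have "U y t = U y (U x t)" using t by simp
    also have "\<dots> = U (U y x) t" by (rule ass[OF y01 x01 t(1)])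
    also have "\<dots> = t" using yx neu t by simp
    finally show "U y t = t" .
  qed
  have fixpow: "\<And>z t n. z \<in> {0..1} \<Longrightarrow> t \<in> {0..1} \<Longrightarrow> U z t = t \<Longrightarrow> U (upow U e z n) t = t"
  proof -
    fix z t :: real and n :: nat assume z: "z \<in> {0..1}" and t: "t \<in> {0..1}" "U z t = t"
    show "U (upow U e z n) t = t"
    proof (induction n)
      case 0 then show ?case using neu t by simp
    next
      case (Suc n)
      have "U (upow U e z (Suc n)) t = U z (U (upow U e z n) t)" using ass z t pw by simp
      then show ?case using Suc t by simp
    qed
  qed
  have xdec: "decseq (upow U e x)"
  proof (rule decseq_SucI)
    fix n
    show "upow U e x (Suc n) \<le> upow U e x n"
      using mono1[of x e "upow U e x n"] x01 e01 pw assms(5) neu by simp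
  qed
  have ye: "e \<le> y" using mono1[of x e y] x01 e01 y01 assms(5) neu xy by simp
  have yinc: "incseq (upow U e y)"
  proof (rule incseq_SucI)
    fix n
    show "upow U e y n \<le> upow U e y (Suc n)"
      using mono1[of e y "upow U e y n"] y01 e01 pw ye neu by simp
  qed
  have limx: "upow U e x \<longlonglongrightarrow> a" by fact
  have limy: "upow U e y \<longlonglongrightarrow> d" using assms(9) yneg by simp
  have age: "\<And>n. a \<le> upow U e x n" using decseq_ge[OF xdec limx] .
  have dle: "\<And>n. upow U e y n \<le> d" using incseq_le[OF yinc limy] .
  have ax: "a \<le> x" using age[of 1] neu x01 com e01 by simp
  have yd: "y \<le> d" using dle[of 1] neu y01 com e01 by simp
  have a0: "0 \<le> a"
    by (rule LIMSEQ_le_const[OF limx]) (use pw x01 in auto)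
  have d1: "d \<le> 1"
    by (rule LIMSEQ_le_const2[OF limy]) (use pw y01 in auto)
  have ed: "e < d"
  proof -
    have "y \<noteq> e" using xy neu x01 com e01 assms(5) by (metis less_irrefl)
    then show ?thesis using ye yd by simp
  qed
  have hyp: "\<And>t. t \<in> {0..a} \<union> {d..1} \<Longrightarrow> U x t = t" using assms(10) by blast
  have F01: "\<And>t. t \<in> {0..a} \<union> {d..1} \<Longrightarrow> t \<in> {0..1}" using a0 d1 ax x01 ed assms(2) by auto
  have xs: "\<And>s. a < s \<Longrightarrow> \<exists>n. upow U e x n < s"
  proof -
    fix s :: real assume "a < s"
    from order_tendstoD(2)[OF limx this] show "\<exists>n. upow U e x n < s"
      by (meson eventually_sequentially order_refl)
  qed
  have ys: "\<And>s. s < d \<Longrightarrow> \<exists>n. s < upow U e y n"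
  proof -
    fix s :: real assume "s < d"
    from order_tendstoD(1)[OF limy this] show "\<exists>n. s < upow U e y n"
      by (meson eventually_sequentially order_refl)
  qed
  have xstrict: "\<And>n. a < upow U e x n"
  proof (rule ccontr)
    fix n assume "\<not> a < upow U e x n"
    then have eq: "upow U e x n = a" using age[of n] by simp
    have aF: "a \<in> {0..a} \<union> {d..1}" using a0 by simp
    have "U (upow U e y n) a = a"
      using fixpow[of y a n] fixy[of a] hyp[OF aF] F01[OF aF] y01 by simp
    then have "e = a" using inv[of n] eq by simp
    then show False using ax assms(5) by simp
  qed
  have ystrict: "\<And>n. upow U e y n < d"
  proof (rule ccontr)
    fix n assume "\<not> upow U e y n < d"
    then have eq: "upow U e y n = d" using dle[of n] by simp
    have dF: "d \<in> {0..a} \<union> {d..1}" using d1 by simp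
    have "U (upow U e x n) d = d"
      using fixpow[of x d n] hyp[OF dF] F01[OF dF] x01 by simp
    moreover have "U (upow U e x n) d = e" using inv[of n] eq com pw x01 y01 by metis
    ultimately show False using ed by simp
  qed
  have notmid: "\<And>t. t \<in> {0..1} \<Longrightarrow> U x t = t \<Longrightarrow> \<not> (a < t \<and> t < d)"
  proof
    fix t :: real assume t: "t \<in> {0..1}" "U x t = t" and m: "a < t \<and> t < d"
    show False
    proof (cases "t \<le> e")
      case True
      obtain n where n: "upow U e x n < t" using xs m by blast
      have "U (upow U e x n) t = t" using fixpow[of x t n] t x01 by simp
      moreover have "U (upow U e x n) t \<le> U (upow U e x n) e"
        using mono2[of t e "upow U e x n"] True t e01 pw x01 by simp
      moreover have "U (upow U e x n) e = upow U e x n" using com neu pw x01 e01 by metis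
      ultimately show False using n by simp
    next
      case False
      obtain n where n: "t < upow U e y n" using ys m by blast
      have "U (upow U e y n) t = t" using fixpow[of y t n] fixy t y01 by simp
      moreover have "U (upow U e y n) e \<le> U (upow U e y n) t"
        using mono2[of e t "upow U e y n"] False t e01 pw y01 by simp
      moreover have "U (upow U e y n) e = upow U e y n" using com neu pw y01 e01 by metis
      ultimately show False using n by simp
    qed
  qed
  have P3: "\<forall>s\<in>{a<..<d}. \<forall>t\<in>{0..a} \<union> {d..1}. U s t = t"
  proof (intro ballI)
    fix s t :: real assume s: "s \<in> {a<..<d}" and t: "t \<in> {0..a} \<union> {d..1}"
    have s01: "s \<in> {0..1}" using s a0 d1 by auto
    have t01: "t \<in> {0..1}" using F01 t .
    obtain n where n: "upow U e x n < s" using xs s by auto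
    obtain m where m: "s < upow U e y m" using ys s by auto
    have "U (upow U e x n) t = t" using fixpow[of x t n] hyp[OF t] t01 x01 by simp
    moreover have "U (upow U e y m) t = t" using fixpow[of y t m] fixy hyp[OF t] t01 y01 by simp
    moreover have "U (upow U e x n) t \<le> U s t" using mono1 n pw x01 s01 t01 by simp
    moreover have "U s t \<le> U (upow U e y m) t" using mono1 m pw y01 s01 t01 by simp
    ultimately show "U s t = t" by simp
  qed
  have P2: "\<forall>s\<in>{0..a} \<union> {d..1}. \<forall>t\<in>{0..a} \<union> {d..1}. U s t \<in> {0..a} \<union> {d..1}"
  proof (intro ballI)
    fix s t :: real assume s: "s \<in> {0..a} \<union> {d..1}" and t: "t \<in> {0..a} \<union> {d..1}"
    have s01: "s \<in> {0..1}" using F01 s .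
    have t01: "t \<in> {0..1}" using F01 t .
    have r01: "U s t \<in> {0..1}" using cl s01 t01 by simp
    have "U x (U s t) = U (U x s) t" using ass x01 s01 t01 by simp
    also have "\<dots> = U s t" using hyp[OF s] by simp
    finally have "\<not> (a < U s t \<and> U s t < d)" using notmid r01 by simp
    then show "U s t \<in> {0..a} \<union> {d..1}" using r01 by auto
  qed
  have P1: "\<forall>s\<in>{a<..<d}. \<forall>t\<in>{a<..<d}. U s t \<in> {a<..<d}"
  proof (intro ballI)
    fix s t :: real assume s: "s \<in> {a<..<d}" and t: "t \<in> {a<..<d}"
    have s01: "s \<in> {0..1}" using s a0 d1 by auto
    have t01: "t \<in> {0..1}" using t a0 d1 by auto
    obtain n where n: "upow U e x n < s" using xs s by auto
    obtain k where k: "upow U e x k < t" using xs t by auto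
    obtain m where m: "s < upow U e y m" using ys s by auto
    obtain l where l: "t < upow U e y l" using ys t by auto
    have "U (upow U e x n) (upow U e x k) \<le> U s (upow U e x k)"
      using mono1 n k pw x01 s01 by simp
    also have "\<dots> \<le> U s t" using mono2 k pw x01 s01 t01 by simp
    finally have lo: "upow U e x (n + k) \<le> U s t" using mult x01 by simp
    have "U s t \<le> U (upow U e y m) t" using mono1 m pw y01 s01 t01 by simp
    also have "\<dots> \<le> U (upow U e y m) (upow U e y l)" using mono2 l m pw y01 t01 by simp
    finally have hi: "U s t \<le> upow U e y (m + l)" using mult y01 by simp
    show "U s t \<in> {a<..<d}" using lo hi xstrict[of "n+k"] ystrict[of "m+l"] by simp
  qed
  show ?thesis using P1 P2 P3 by blast
qed

end
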